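(* Let $k\ge 2$ and $\alpha\in[0,1)$ be such that $b=\frac{k-1}{1-\alpha}$ is an integer, and let $n$ be a positive integer divisible by $b$; put $t=\alpha n$ (an integer). Then \[ S(n,t,k)\ \ge\ \binom{b}{\alpha b}^{n/b}. \]
   Context: A $k$-CNF formula is a conjunction of clauses (disjunctions of literals) each of width at most $k$. $\mathrm{sat}_t(F)$ is the set of satisfying assignments of $F$ of Hamming weight exactly $t$. $F$ is $t$-admissible if it has no satisfying assignment of Hamming weight less than $t$. $S(n,t,k)$ is the maximum of $|\mathrm{sat}_t(F)|$ over all $t$-admissible $k$-CNF formulas $F$ on $n$ variables. *)

theory Defs
  imports Complex_Main
begin

text \<open>A literal is a pair (i, b): b = True means the positive literal x_i, b = False its negation.
A clause is a finite set of literals (their disjunction); a CNF formula is a finite set of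
clauses (their conjunction). An assignment is represented by the set of variables set to 1;
its Hamming weight is its cardinality.\<close>

type_synonym literal = "nat \<times> bool"
type_synonym clause = "literal set"
type_synonym cnf = "clause set"

definition is_kcnf :: "nat \<Rightarrow> nat \<Rightarrow> cnf \<Rightarrow> bool" where
  "is_kcnf n k F \<longleftrightarrow> finite F \<and>
     (\<forall>C\<in>F. finite C \<and> card C \<le> k \<and> (\<forall>(i, b)\<in>C. i < n))"

definition sat_clause :: "nat set \<Rightarrow> clause \<Rightarrow> bool" where
  "sat_clause A C \<longleftrightarrow> (\<exists>(i, b)\<in>C. (i \<in> A) = b)"

definition satisfies :: "nat set \<Rightarrow> cnf \<Rightarrow> bool" where
  "satisfies A F \<longleftrightarrow> (\<forall>C\<in>F. sat_clause A C)"

definition sat_t :: "nat \<Rightarrow> nat \<Rightarrow> cnf \<Rightarrow> nat set set" where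
  "sat_t n t F = {A. A \<subseteq> {0..<n} \<and> card A = t \<and> satisfies A F}"

definition admissible :: "nat \<Rightarrow> nat \<Rightarrow> cnf \<Rightarrow> bool" where
  "admissible n t F \<longleftrightarrow> (\<forall>A. A \<subseteq> {0..<n} \<and> card A < t \<longrightarrow> \<not> satisfies A F)"

definition S :: "nat \<Rightarrow> nat \<Rightarrow> nat \<Rightarrow> nat" where
  "S n t k = Max {card (sat_t n t F) | F. is_kcnf n k F \<and> admissible n t F}"

end

theory Submission
  imports Defs "HOL-Library.FuncSet"
begin

definition blk :: "nat \<Rightarrow> nat \<Rightarrow> nat \<Rightarrow> nat set" where
  "blk b n j = {x\<in>{0..<n}. x div b = j}"

definition cnfF :: "nat \<Rightarrow> nat \<Rightarrow> nat \<Rightarrow> nat \<Rightarrow> cnf" where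
  "cnfF b n m k = {(\<lambda>i. (i,True)) ` K | K j. j < m \<and> K \<subseteq> blk b n j \<and> card K = k}"

lemma blk_eq:
  assumes "0 < b" "j < m" "n = m * b"
  shows "blk b n j = {j*b..<j*b+b}"
proof -
  have "j*b + b \<le> n" using assms
    by (metis Suc_leI add.commute mult_Suc mult_le_mono1)
  moreover have D: "\<And>x. (x div b = j) = (j*b \<le> x \<and> x < j*b+b)"
  proof -
    fix x
    show "(x div b = j) = (j*b \<le> x \<and> x < j*b+b)"
    proof
      assume "x div b = j" then show "j*b \<le> x \<and> x < j*b+b"
        using assms(1) div_mult_mod_eq[of x b] mod_less_divisor[of b x] by (metis add_less_cancel_left le_add1 mult.commute)
    next
      assume "j*b \<le> x \<and> x < j*b+b" then show "x div b = j"
        using assms(1) by (metis add.commute div_nat_eqI mult.commute mult_Suc_right)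
    qed
  qed
  ultimately show ?thesis unfolding blk_def
  proof -
    assume L: "j*b + b \<le> n"
    show "{x \<in> {0..<n}. x div b = j} = {j*b..<j*b+b}"
    proof (rule set_eqI)
      fix x show "(x \<in> {x \<in> {0..<n}. x div b = j}) = (x \<in> {j*b..<j*b+b})"
        using D[of x] L by auto
    qed
  qed
qed

lemma blk_card:
  assumes "0 < b" "j < m" "n = m * b"
  shows "card (blk b n j) = b"
  using blk_eq[OF assms] by simp

lemma blk_fin: "finite (blk b n j)" unfolding blk_def by auto

lemma blk_disj: "i \<noteq> j \<Longrightarrow> blk b n i \<inter> blk b n j = {}"
  unfolding blk_def by auto

lemma blk_union:
  assumes "0 < b" "n = m * b"
  shows "(\<Union>j<m. blk b n j) = {0..<n}"
proof -
  have "\<And>x. x < n \<Longrightarrow> x div b < m" using assms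
    by (simp add: less_mult_imp_div_less)
  then show ?thesis unfolding blk_def by auto
qed

lemma card_split:
  assumes "0 < b" "n = m * b" "A \<subseteq> {0..<n}"
  shows "card A = (\<Sum>j<m. card (A \<inter> blk b n j))"
proof -
  have "A = (\<Union>j<m. A \<inter> blk b n j)" using blk_union[OF assms(1,2)] assms(3) by auto
  then have "card A = card (\<Union>j<m. A \<inter> blk b n j)" by simp
  also have "\<dots> = (\<Sum>j<m. card (A \<inter> blk b n j))"
    by (rule card_UN_disjoint) (auto simp: blk_fin blk_def)
  finally show ?thesis .
qed

lemma kcnf: "is_kcnf n k (cnfF b n m k)"
proof -
  have "cnfF b n m k \<subseteq> (\<lambda>K. (\<lambda>i. (i,True)) ` K) ` Pow {0..<n}"
    unfolding cnfF_def blk_def by (auto intro!: image_eqI)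
  then have "finite (cnfF b n m k)" by (meson finite_Pow_iff finite_atLeastLessThan finite_imageI finite_subset)
  moreover have "\<forall>C\<in>cnfF b n m k. finite C \<and> card C \<le> k \<and> (\<forall>(i, b)\<in>C. i < n)"
  proof
    fix C assume "C \<in> cnfF b n m k"
    then obtain K j where C: "C = (\<lambda>i. (i,True)) ` K" "K \<subseteq> blk b n j" "card K = k"
      unfolding cnfF_def by auto
    have "finite K" using C(2) blk_fin finite_subset by blast
    moreover have "card C = card K" unfolding C(1) by (rule card_image) (auto simp: inj_on_def)
    ultimately show "finite C \<and> card C \<le> k \<and> (\<forall>(i, b)\<in>C. i < n)"
      using C unfolding blk_def by auto
  qed
  ultimately show ?thesis unfolding is_kcnf_def by blast
qed

lemma sat_iff:
  assumes "0 < b" "n = m * b" "b = a + (k - 1)" "k \<ge> 1"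
  shows "satisfies A (cnfF b n m k) \<longleftrightarrow> (\<forall>j<m. a \<le> card (A \<inter> blk b n j))"
proof
  assume s: "satisfies A (cnfF b n m k)"
  show "\<forall>j<m. a \<le> card (A \<inter> blk b n j)"
  proof (intro allI impI, rule ccontr)
    fix j assume j: "j < m" and c: "\<not> a \<le> card (A \<inter> blk b n j)"
    have "card (blk b n j - A) = card (blk b n j) - card (A \<inter> blk b n j)"
      by (metis Diff_Int2 Diff_Int_distrib2 blk_fin card_Diff_subset_Int finite_Int inf.idem inf_commute)
    then have "card (blk b n j - A) \<ge> k" using blk_card[OF assms(1) j assms(2)] c assms(3,4) by linarith
    then obtain K where K: "K \<subseteq> blk b n j - A" "card K = k"
      by (meson obtain_subset_with_card_n)
    then have "(\<lambda>i. (i,True)) ` K \<in> cnfF b n m k" unfolding cnfF_def using j by blast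
    then have "sat_clause A ((\<lambda>i. (i,True)) ` K)" using s unfolding satisfies_def by blast
    then show False using K(1) unfolding sat_clause_def by auto
  qed
next
  assume h: "\<forall>j<m. a \<le> card (A \<inter> blk b n j)"
  show "satisfies A (cnfF b n m k)" unfolding satisfies_def
  proof
    fix C assume "C \<in> cnfF b n m k"
    then obtain K j where C: "C = (\<lambda>i. (i,True)) ` K" "K \<subseteq> blk b n j" "card K = k" "j < m"
      unfolding cnfF_def by auto
    show "sat_clause A C"
    proof (rule ccontr)
      assume "\<not> sat_clause A C"
      then have "K \<subseteq> blk b n j - A" using C unfolding sat_clause_def by auto
      then have "k \<le> card (blk b n j - A)" using C(3) blk_fin
        by (metis card_mono finite_Diff)
      moreover have "card (blk b n j - A) = card (blk b n j) - card (A \<inter> blk b n j)"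
        by (metis Diff_Int2 Diff_Int_distrib2 blk_fin card_Diff_subset_Int finite_Int inf.idem inf_commute)
      ultimately show False using h C(4) blk_card[OF assms(1) C(4) assms(2)] assms(3,4) by force
    qed
  qed
qed


lemma count_lb:
  assumes "0 < b" "n = m * b" "b = a + (k - 1)" "k \<ge> 1"
  shows "(b choose a) ^ m \<le> card (sat_t n (m * a) (cnfF b n m k))"
proof -
  define P where "P = PiE {..<m} (\<lambda>j. {X. X \<subseteq> blk b n j \<and> card X = a})"
  define g where "g f = (\<Union>j<m. f j)" for f :: "nat \<Rightarrow> nat set"
  have cP: "card P = (b choose a) ^ m"
  proof -
    have "card P = (\<Prod>j<m. card {X. X \<subseteq> blk b n j \<and> card X = a})"
      unfolding P_def by (simp add: card_PiE)
    also have "\<dots> = (\<Prod>j<m. b choose a)"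
      by (rule prod.cong) (auto simp: n_subsets blk_fin blk_card[OF assms(1) _ assms(2)])
    finally show ?thesis by simp
  qed
  have key: "g f \<inter> blk b n i = f i" if "f \<in> P" "i < m" for f i
  proof -
    have S: "\<And>j. j < m \<Longrightarrow> f j \<subseteq> blk b n j" using that(1) unfolding P_def by auto
    have D: "\<And>x j. x \<in> blk b n j \<Longrightarrow> x div b = j" unfolding blk_def by simp
    show ?thesis
    proof (rule set_eqI, rule iffI)
      fix x assume "x \<in> g f \<inter> blk b n i"
      then obtain j where j: "j<m" "x \<in> f j" "x \<in> blk b n i" unfolding g_def by auto
      then have "x \<in> blk b n j" using S by auto
      then have "j = i" using j(3) D by metis
      then show "x \<in> f i" using j by simp
    next
      fix x assume "x \<in> f i" then show "x \<in> g f \<inter> blk b n i" using S that(2) unfolding g_def by auto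
    qed
  qed
  have inj: "inj_on g P"
  proof (rule inj_onI)
    fix f f' assume f: "f \<in> P" "f' \<in> P" "g f = g f'"
    show "f = f'"
    proof (rule PiE_ext)
      show "f \<in> PiE {..<m} (\<lambda>j. {X. X \<subseteq> blk b n j \<and> card X = a})" using f P_def by simp
      show "f' \<in> PiE {..<m} (\<lambda>j. {X. X \<subseteq> blk b n j \<and> card X = a})" using f P_def by simp
      fix i assume "i \<in> {..<m}"
      then show "f i = f' i" using key[OF f(1)] key[OF f(2)] f(3) by (metis lessThan_iff)
    qed
  qed
  have sub: "g ` P \<subseteq> sat_t n (m * a) (cnfF b n m k)"
  proof
    fix A assume "A \<in> g ` P"
    then obtain f where f: "f \<in> P" "A = g f" by auto
    have ss: "A \<subseteq> {0..<n}"
    proof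
      fix x assume "x \<in> A"
      then obtain j where "j < m" "x \<in> f j" using f unfolding g_def by auto
      then have "x \<in> blk b n j" using f(1) unfolding P_def by auto
      then show "x \<in> {0..<n}" unfolding blk_def by auto
    qed
    have bl: "\<And>j. j < m \<Longrightarrow> card (A \<inter> blk b n j) = a"
      using key[OF f(1)] f P_def by auto
    have "card A = (\<Sum>j<m. card (A \<inter> blk b n j))" by (rule card_split[OF assms(1,2) ss])
    also have "\<dots> = m * a" using bl by simp
    finally have "card A = m * a" .
    moreover have "satisfies A (cnfF b n m k)" using sat_iff[OF assms] bl by simp
    ultimately show "A \<in> sat_t n (m * a) (cnfF b n m k)" using ss unfolding sat_t_def by auto
  qed
  have fin: "finite (sat_t n (m * a) (cnfF b n m k))"
    by (rule finite_subset[of _ "Pow {0..<n}"]) (auto simp: sat_t_def)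
  have "card (g ` P) = card P" by (rule card_image[OF inj])
  then show ?thesis using card_mono[OF fin sub] cP by simp
qed

lemma adm:
  assumes "0 < b" "n = m * b" "b = a + (k - 1)" "k \<ge> 1"
  shows "admissible n (m * a) (cnfF b n m k)"
  unfolding admissible_def
proof (intro allI impI)
  fix A assume A: "A \<subseteq> {0..<n} \<and> card A < m * a"
  show "\<not> satisfies A (cnfF b n m k)"
  proof
    assume "satisfies A (cnfF b n m k)"
    then have bl: "\<forall>j<m. a \<le> card (A \<inter> blk b n j)" using sat_iff[OF assms] by simp
    have "card A = (\<Sum>j<m. card (A \<inter> blk b n j))" using card_split[OF assms(1,2)] A by simp
    also have "\<dots> \<ge> (\<Sum>j<m. a)" by (rule sum_mono) (use bl in auto)
    finally show False using A by simp
  qed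
qed

lemma S_ge:
  assumes "is_kcnf n k F" "admissible n t F"
  shows "card (sat_t n t F) \<le> S n t k"
proof -
  let ?V = "{card (sat_t n t F) | F. is_kcnf n k F \<and> admissible n t F}"
  have "\<And>F. card (sat_t n t F) \<le> card (Pow {0..<n})"
    by (rule card_mono) (auto simp: sat_t_def)
  then have "?V \<subseteq> {..card (Pow {0..<n})}" by auto
  then have "finite ?V" using finite_subset by blast
  moreover have "card (sat_t n t F) \<in> ?V" using assms by blast
  ultimately show ?thesis unfolding S_def by (rule Max_ge)
qed

theorem theorem2:
  fixes k b n :: nat and \<alpha> :: real
  assumes "k \<ge> 2" and "0 \<le> \<alpha>" and "\<alpha> < 1"
    and "real b = (real k - 1) / (1 - \<alpha>)"
    and "n > 0" and "b dvd n"
  shows "real (S n (nat \<lfloor>\<alpha> * real n\<rfloor>) k)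
           \<ge> real (b choose nat \<lfloor>\<alpha> * real b\<rfloor>) ^ (n div b)"
proof -
  define m where "m = n div b"
  define a where "a = b - (k - 1)"
  have e: "real b * (1 - \<alpha>) = real k - 1" using assms(3,4) by (simp add: field_simps)
  have "real b > 0" using e assms(1) by (cases "b = 0") auto
  then have b0: "0 < b" by simp
  have "real b \<ge> real b * (1 - \<alpha>)" using assms(2) b0 by (simp add: mult_left_le)
  then have "real b \<ge> real k - 1" using e by simp
  then have kb: "k - 1 \<le> b" using assms(1) by linarith
  then have ab: "b = a + (k - 1)" unfolding a_def by simp
  have ra: "\<alpha> * real b = real a" using e kb assms(1) unfolding a_def
    by (simp add: of_nat_diff algebra_simps)
  have nm: "n = m * b" using assms(6) unfolding m_def by simp
  have "\<alpha> * real n = real (m * a)" using ra nm by (simp add: algebra_simps)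
  then have t: "nat \<lfloor>\<alpha> * real n\<rfloor> = m * a" by (metis floor_of_nat nat_int)
  have t2: "nat \<lfloor>\<alpha> * real b\<rfloor> = a" using ra by simp
  have k1: "k \<ge> 1" using assms(1) by simp
  have "(b choose a) ^ m \<le> card (sat_t n (m * a) (cnfF b n m k))"
    by (rule count_lb[OF b0 nm ab k1])
  also have "\<dots> \<le> S n (m * a) k"
    by (rule S_ge[OF kcnf adm[OF b0 nm ab k1]])
  finally show ?thesis unfolding t t2 m_def[symmetric] by (metis of_nat_le_iff of_nat_power)
qed

end
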